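(* Let $\alpha>0$. The equation $e^{2\sigma}=\alpha\sigma+\frac12$ has infinitely many roots $\sigma\in\mathbb{C}$, and their real parts are unbounded above: there is a sequence of roots $\sigma_k$ with $\Im(\sigma_k)\to+\infty$ and $\Re(\sigma_k)-\frac12\ln k$ bounded as $k\to\infty$; in particular $\Re(\sigma_k)\to+\infty$.
   Context: This is the dispersion relation of the square-wave limit ($\beta\to0$) of the model equation $u_t+\frac12(u^2-u\,u(0^-,t))_x=f(x,u(0^-,t))$ with the shifted-Gaussian source whose peak location is $-u(0^-,t)^{-\alpha}$; its roots with positive real part are the eigenvalues of the linearized problem in that limit. *)

theory Defs
  imports "HOL-Analysis.Analysis"
begin

end

theory Submission imports Defs "HOL-Analysis.Analysis" "HOL-Real_Asymp.Real_Asymp" begin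

lemma core:
  fixes a k :: real
  assumes a: "a > 0" and kn: "k = real n" and k1: "a * pi * k \<ge> 1"
    and kL: "ln (a * (2*pi*k + pi) + 1/2) \<le> 2*pi*k + pi"
  shows "\<exists>z. exp z = complex_of_real (a/2) * z + 1/2 \<and> 2*pi*k \<le> Im z
     \<and> ln (a*pi*k) \<le> Re z \<and> Re z \<le> ln (a * (2*pi*k + pi) + 1/2)"
proof -
  define L where "L = 2*pi*k + pi"
  define S where "S = cbox (Complex 0 (2*pi*k)) (Complex L L)"
  define W where "W = (\<lambda>z. complex_of_real (a/2) * z + 1/2)"
  define T where "T = (\<lambda>z. Ln (W z) + \<i> * complex_of_real (2*pi*k))"
  have kpos: "k > 0" using k1 a
    by (smt (verit, ccfv_SIG) mult_nonneg_nonpos pi_gt_zero zero_less_mult_iff)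
  have memS: "z \<in> S \<longleftrightarrow> 0 \<le> Re z \<and> Re z \<le> L \<and> 2*pi*k \<le> Im z \<and> Im z \<le> L" for z
    by (auto simp: S_def cbox_complex_eq)
  have ImW: "Im (W z) = a/2 * Im z" for z by (simp add: W_def)
  have ReW: "Re (W z) = a/2 * Re z + 1/2" for z by (simp add: W_def)
  have Wlow: "norm (W z) \<ge> a*pi*k" if "z \<in> S" for z
  proof -
    have "a/2 * (2*pi*k) \<le> a/2 * Im z" using that memS[of z] a
      by (intro mult_left_mono) auto
    hence "a*pi*k \<le> a/2 * Im z" by simp
    also have "\<dots> \<le> norm (W z)" using abs_Im_le_cmod[of "W z"] ImW[of z] by linarith
    finally show ?thesis .
  qed
  have Wup: "norm (W z) \<le> a * L + 1/2" if "z \<in> S" for z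
  proof -
    have "norm (W z) \<le> norm (complex_of_real (a/2) * z) + norm (1/2::complex)"
      unfolding W_def by (rule norm_triangle_ineq)
    also have "norm (complex_of_real (a/2) * z) = a/2 * norm z" using a by (simp add: norm_mult)
    also have "norm z \<le> \<bar>Re z\<bar> + \<bar>Im z\<bar>" by (rule cmod_le)
    also have "\<bar>Re z\<bar> + \<bar>Im z\<bar> \<le> 2 * L" using that memS[of z] kpos
      by (smt (verit) mult_pos_pos pi_gt_zero)
    finally show ?thesis using a by (simp add: mult_left_mono)
  qed
  have Wnz: "W z \<noteq> 0" and Wim: "Im (W z) > 0" if "z \<in> S" for z
  proof -
    show "Im (W z) > 0" using that memS[of z] a kpos ImW[of z]
      by (smt (verit, ccfv_SIG) mult_pos_pos pi_gt_zero half_gt_zero)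
    then show "W z \<noteq> 0" by auto
  qed
  have nr: "W z \<notin> \<real>\<^sub>\<le>\<^sub>0" if "z \<in> S" for z
    using Wim[OF that] nonpos_Reals_Real complex_is_Real_iff by fastforce
  have cont: "continuous_on S T"
    unfolding T_def
    by (intro continuous_intros nr) (auto simp: W_def intro!: continuous_intros)
  have maps: "T \<in> S \<rightarrow> S"
  proof
    fix z assume z: "z \<in> S"
    have R: "Re (T z) = ln (norm (W z))" using Wnz[OF z] by (simp add: T_def)
    have I: "Im (T z) = Im (Ln (W z)) + 2*pi*k" by (simp add: T_def)
    have "0 < Im (Ln (W z)) \<and> Im (Ln (W z)) < pi" using Im_Ln_pos_lt_imp Wim[OF z] by blast
    moreover have "0 \<le> ln (norm (W z))" using Wlow[OF z] k1 by simp
    moreover have "ln (norm (W z)) \<le> L"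
    proof -
      have p: "0 < norm (W z)" using Wlow[OF z] k1 by linarith
      have "ln (norm (W z)) \<le> ln (a*L+1/2)" using p Wup[OF z] by (intro ln_mono) auto
      thus ?thesis using kL unfolding L_def by linarith
    qed
    ultimately show "T z \<in> S" using memS R I unfolding L_def by auto
  qed
  have "S \<noteq> {}" using memS[of "Complex 0 (2*pi*k)"] kpos unfolding L_def
    by (auto simp: pi_gt_zero)
  moreover have "compact S" "convex S" unfolding S_def by auto
  ultimately obtain z where z: "z \<in> S" "T z = z"
    using brouwer[of S T] cont maps by metis
  have "exp z = exp (Ln (W z)) * exp (\<i> * complex_of_real (2*pi*k))"
    using z(2) unfolding T_def by (metis exp_add)
  also have "exp (\<i> * complex_of_real (2*pi*k)) = 1"
  proof -
    have "exp ((2 * of_nat n * pi) * \<i>) = 1" by (rule exp_integer_2pi) simp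
    thus ?thesis unfolding kn by (simp add: mult_ac)
  qed
  finally have "exp z = W z" using Wnz[OF z(1)] by simp
  moreover have "Re z = ln (norm (W z))"
  proof -
    have "Re z = Re (T z)" using z(2) by simp
    also have "\<dots> = ln (norm (W z))" using Wnz[OF z(1)] by (simp add: T_def)
    finally show ?thesis .
  qed
  moreover have p: "0 < norm (W z)" using Wlow[OF z(1)] k1 by linarith
  moreover have "ln (norm (W z)) \<le> ln (a*L+1/2)" using p Wup[OF z(1)] by (intro ln_mono) auto
  moreover have "ln (a*pi*k) \<le> ln (norm (W z))" using p Wlow[OF z(1)] k1 by (intro ln_mono) auto
  ultimately show ?thesis using z(1) memS[of z]
    unfolding W_def L_def by auto
qed
lemma chain3: fixes x A P C Q R :: real
  shows "x \<le> A/2 \<Longrightarrow> A \<le> P + C \<Longrightarrow> P \<le> Q + R \<Longrightarrow> x \<le> Q/2 + R/2 + C/2" by linarith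

lemma asy:
  fixes a :: real assumes a: "a > 0"
  shows "eventually (\<lambda>k::nat. a*pi*real k \<ge> 1 \<and> ln (a*(2*pi*real k+pi)+1/2) \<le> 2*pi*real k+pi) sequentially"
  using a by (intro eventually_conj; real_asymp)

theorem mainTheorem6:
  fixes \<alpha> :: real
  assumes "\<alpha> > 0"
  shows "infinite {\<sigma>::complex. exp (2 * \<sigma>) = complex_of_real \<alpha> * \<sigma> + 1/2}
    \<and> (\<exists>\<sigma> :: nat \<Rightarrow> complex.
          (\<forall>k. exp (2 * \<sigma> k) = complex_of_real \<alpha> * \<sigma> k + 1/2)
        \<and> filterlim (\<lambda>k. Im (\<sigma> k)) at_top sequentially
        \<and> (\<exists>B. \<forall>k\<ge>1. \<bar>Re (\<sigma> k) - ln (real k) / 2\<bar> \<le> B)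
        \<and> filterlim (\<lambda>k. Re (\<sigma> k)) at_top sequentially)"
proof -
  have a: "\<alpha> > 0" by fact
  obtain K1 where K1: "\<And>k. k \<ge> K1 \<Longrightarrow> \<alpha>*pi*real k \<ge> 1 \<and> ln (\<alpha>*(2*pi*real k+pi)+1/2) \<le> 2*pi*real k+pi"
    using asy[OF a] unfolding eventually_sequentially by blast
  define K0 where "K0 = max K1 1"
  have K0: "\<And>k. k \<ge> K0 \<Longrightarrow> \<alpha>*pi*real k \<ge> 1 \<and> ln (\<alpha>*(2*pi*real k+pi)+1/2) \<le> 2*pi*real k+pi"
    "K0 \<ge> 1" using K1 unfolding K0_def by auto
  have "\<forall>k. \<exists>w. exp (2*w) = complex_of_real \<alpha> * w + 1/2 \<and> pi * real (max k K0) \<le> Im w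
     \<and> ln (\<alpha>*pi*real (max k K0)) / 2 \<le> Re w \<and> Re w \<le> ln (\<alpha> * (2*pi*real (max k K0) + pi) + 1/2) / 2"
  proof
    fix k
    define m where "m = max k K0"
    have "m \<ge> K0" unfolding m_def by simp
    from K0(1)[OF this] obtain z where z: "exp z = complex_of_real (\<alpha>/2) * z + 1/2" "2*pi*real m \<le> Im z"
      "ln (\<alpha>*pi*real m) \<le> Re z" "Re z \<le> ln (\<alpha> * (2*pi*real m + pi) + 1/2)"
      using core[OF a, of "real m" m] by auto
    have "exp (2*(z/2)) = complex_of_real \<alpha> * (z/2) + 1/2" using z(1)
      by (simp add: field_simps)
    then show "\<exists>w. exp (2*w) = complex_of_real \<alpha> * w + 1/2 \<and> pi * real (max k K0) \<le> Im w
     \<and> ln (\<alpha>*pi*real (max k K0)) / 2 \<le> Re w \<and> Re w \<le> ln (\<alpha> * (2*pi*real (max k K0) + pi) + 1/2) / 2"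
      using z(2-4) unfolding m_def[symmetric] by (intro exI[of _ "z/2"]) auto
  qed
  then obtain \<sigma> where \<sigma>: "\<And>k. exp (2*\<sigma> k) = complex_of_real \<alpha> * \<sigma> k + 1/2"
    "\<And>k. pi * real (max k K0) \<le> Im (\<sigma> k)"
    "\<And>k. ln (\<alpha>*pi*real (max k K0)) / 2 \<le> Re (\<sigma> k)"
    "\<And>k. Re (\<sigma> k) \<le> ln (\<alpha> * (2*pi*real (max k K0) + pi) + 1/2) / 2"
    by metis
  have Im: "pi * real k \<le> Im (\<sigma> k)" for k
    using \<sigma>(2)[of k] by (smt (verit) mult_left_mono pi_gt_zero of_nat_mono max.cobounded1)
  define B where "B = \<bar>ln (\<alpha>*pi)\<bar>/2 + \<bar>ln (3*\<alpha>*pi+1/2)\<bar>/2 + ln (real K0)/2"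
  have Rb: "ln (\<alpha>*pi)/2 + ln (real k)/2 \<le> Re (\<sigma> k) \<and> \<bar>Re (\<sigma> k) - ln (real k) / 2\<bar> \<le> B" if k: "k \<ge> 1" for k
  proof -
    define m where "m = max k K0"
    have m1: "real m \<ge> 1" "real k \<le> real m" "real m \<le> real K0 * real k" "real k \<ge> 1"
      using k K0(2) unfolding m_def by (auto simp: mult_le_cancel_right1 simp flip: of_nat_mult)
    have lm: "ln (real k) \<le> ln (real m)" using m1 by (intro ln_mono) auto
    have lm2: "ln (real m) \<le> ln (real K0) + ln (real k)"
    proof -
      have "ln (real K0) + ln (real k) = ln (real K0 * real k)" using m1 K0(2) by (simp add: ln_mult)
      moreover have "ln (real m) \<le> ln (real K0 * real k)" using m1 by (intro ln_mono) auto
      ultimately show ?thesis by simp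
    qed
    have low: "ln (\<alpha>*pi*real m) = ln (\<alpha>*pi) + ln (real m)" using a m1 by (simp add: ln_mult)
    have "ln (\<alpha> * (2*pi*real m + pi) + 1/2) \<le> ln (real m * (3*\<alpha>*pi+1/2))"
    proof (rule ln_mono)
      show "0 < \<alpha> * (2*pi*real m + pi) + 1/2" using a m1 by (simp add: add_pos_nonneg)
      have h1: "\<alpha>*pi*1 \<le> \<alpha>*pi*real m" using a m1 by (intro mult_left_mono) auto
      have e1: "\<alpha> * (2*pi*real m + pi) + 1/2 = 2*(\<alpha>*pi*real m) + \<alpha>*pi*1 + 1/2" by (simp add: algebra_simps)
      have e2: "real m * (3*\<alpha>*pi+1/2) = 3*(\<alpha>*pi*real m) + real m/2" by (simp add: algebra_simps)
      show "\<alpha> * (2*pi*real m + pi) + 1/2 \<le> real m * (3*\<alpha>*pi+1/2)" unfolding e1 e2 using h1 m1 by linarith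
    qed
    also have "\<dots> = ln (real m) + ln (3*\<alpha>*pi+1/2)"
    proof -
      have "0 < 3*\<alpha>*pi+1/2" using a by (simp add: add_pos_nonneg)
      then show ?thesis using m1 by (simp add: ln_mult)
    qed
    finally have up: "ln (\<alpha> * (2*pi*real m + pi) + 1/2) \<le> ln (real m) + ln (3*\<alpha>*pi+1/2)" .
    have r1: "ln (\<alpha>*pi)/2 + ln (real k)/2 \<le> Re (\<sigma> k)" using \<sigma>(3)[of k, folded m_def] low lm by linarith
    have r2: "Re (\<sigma> k) \<le> ln (real K0)/2 + ln (real k)/2 + ln (3*\<alpha>*pi+1/2)/2"
      using \<sigma>(4)[of k, folded m_def] up lm2
      by (metis (no_types) chain3)
    have "0 \<le> ln (real K0)" using K0(2) by simp
    then show ?thesis using r1 r2 unfolding B_def by linarith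
  qed
  have f1: "filterlim (\<lambda>k. Im (\<sigma> k)) at_top sequentially"
  proof (rule filterlim_at_top_mono[OF _ always_eventually])
    show "filterlim (\<lambda>k::nat. pi * real k) at_top sequentially" by real_asymp
    show "\<forall>k. pi * real k \<le> Im (\<sigma> k)" using Im by blast
  qed
  have f2: "filterlim (\<lambda>k. Re (\<sigma> k)) at_top sequentially"
  proof (rule filterlim_at_top_mono)
    show "filterlim (\<lambda>k::nat. ln (\<alpha>*pi)/2 + ln (real k)/2) at_top sequentially" by real_asymp
    show "eventually (\<lambda>k. ln (\<alpha>*pi)/2 + ln (real k)/2 \<le> Re (\<sigma> k)) sequentially"
      using Rb unfolding eventually_sequentially by blast
  qed
  have inf: "infinite {\<sigma>::complex. exp (2 * \<sigma>) = complex_of_real \<alpha> * \<sigma> + 1/2}" (is "infinite ?S")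
  proof
    assume fin: "finite ?S"
    have "range \<sigma> \<subseteq> ?S" using \<sigma>(1) by auto
    hence "finite (Im ` range \<sigma>)" using fin by (meson finite_imageI finite_subset)
    then obtain M where M: "\<And>k. Im (\<sigma> k) \<le> M"
      by (metis (mono_tags, lifting) bdd_above.E bdd_above_finite rangeI image_eqI)
    obtain k :: nat where "real k > M / pi" using reals_Archimedean2 by blast
    hence "pi * real k > M" by (simp add: field_simps)
    thus False using Im[of k] M[of k] by linarith
  qed
  show ?thesis using inf f1 f2 Rb \<sigma>(1) by blast
qed
end
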